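(* Let $f:\mathbb{R}\to\mathbb{R}$ and $g:\mathbb{R}\to\mathbb{R}$ be real functions that are (real-)analytic in a neighborhood $U$ of a point $x_0\in\mathbb{R}$. Let $K\ge 0$ be an integer such that $f^{(j)}(x_0)=g^{(j)}(x_0)=0$ for $j=0,1,\dots,K$, and $g^{(K+1)}(x_0)\neq 0$. Let $R>0$ be such that $V=[x_0-R,\,x_0+R]\subset U$ and such that $f^{(j)}(x)\neq 0$ and $g^{(j)}(x)\neq 0$ for all $x\in V$ with $x\neq x_0$ and all $j=0,1,\dots,K+1$. Then \[ \lim_{n\to\infty}\frac{I_n^f(x)}{I_n^g(x)}=\frac{f^{(K+1)}(x_0)}{g^{(K+1)}(x_0)}, \] and the convergence is uniform in $x\in V\setminus\{x_0\}$, where the sequences $I_n^f$, $I_n^g$ are constructed with $x_0$ as the lower limit of integration.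
   Context: For a continuous function $h:\mathbb{R}\to\mathbb{R}$ and the point $x_0\in\mathbb{R}$, the sequence of functions $I_n^h$ ($n=0,1,2,\dots$) is defined inductively by $I_0^h(x)=h(x)$ and $I_{n+1}^h(x)=\int_{x_0}^{x} I_n^h(t)\,dt$. The notation $h^{(j)}$ denotes the $j$-th derivative of $h$ (with $h^{(0)}=h$). *)

theory Defs
  imports "HOL-Analysis.Analysis"
begin

definition real_analytic_on :: "(real \<Rightarrow> real) \<Rightarrow> real set \<Rightarrow> bool" where
  "real_analytic_on f U \<longleftrightarrow>
     (\<forall>y\<in>U. \<exists>r>0. \<exists>a::nat \<Rightarrow> real.
        \<forall>x\<in>ball y r. (\<lambda>k. a k * (x - y) ^ k) sums f x)"

definition oint :: "real \<Rightarrow> real \<Rightarrow> (real \<Rightarrow> real) \<Rightarrow> real" where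
  "oint a b h = (if a \<le> b then integral {a..b} h else - integral {b..a} h)"

fun iter_int :: "real \<Rightarrow> nat \<Rightarrow> (real \<Rightarrow> real) \<Rightarrow> real \<Rightarrow> real" where
  "iter_int x0 0 h = h"
| "iter_int x0 (Suc n) h = (\<lambda>x. oint x0 x (iter_int x0 n h))"

end

theory Submission
  imports Defs
begin


lemma analytic_deriv:
  assumes "real_analytic_on h U" "y \<in> U"
  obtains r a where "r > 0" "\<And>x. x \<in> ball y r \<Longrightarrow> (h has_real_derivative (\<Sum>k. diffs a k * (x - y) ^ k)) (at x)"
    "\<And>x. x \<in> ball y r \<Longrightarrow> (\<lambda>k. diffs a k * (x - y) ^ k) sums (\<Sum>k. diffs a k * (x - y) ^ k)"
proof -
  obtain r a where r: "r > 0" and s: "\<And>x. x \<in> ball y r \<Longrightarrow> (\<lambda>k. a k * (x - y) ^ k) sums h x"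
    using assms unfolding real_analytic_on_def by blast
  have sm: "summable (\<lambda>n. a n * z ^ n)" if "norm z < r" for z
  proof -
    have "y + z \<in> ball y r" using that by (simp add: dist_norm)
    from s[OF this] show ?thesis by (simp add: sums_iff)
  qed
  show ?thesis
  proof (rule that[OF r])
    fix x assume x: "x \<in> ball y r"
    have nx: "norm (x - y) < r" using x by (simp add: dist_norm norm_minus_commute)
    have d1: "((\<lambda>z. \<Sum>n. a n * z ^ n) has_field_derivative (\<Sum>n. diffs a n * (x - y) ^ n)) (at (x - y))"
      by (rule termdiffs_strong'[OF sm nx]) auto
    have d2: "((\<lambda>t. \<Sum>n. a n * (t - y) ^ n) has_field_derivative (\<Sum>n. diffs a n * (x - y) ^ n)) (at x)"
    proof -
      have "((\<lambda>t. t - y) has_real_derivative 1) (at x)" by (auto intro!: derivative_eq_intros)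
      from DERIV_chain2[where g="\<lambda>t. t - y" and x=x, OF d1 this] show ?thesis by simp
    qed
    show "(h has_real_derivative (\<Sum>k. diffs a k * (x - y) ^ k)) (at x)"
      apply (rule has_field_derivative_transform_within_open[OF d2 _ x])
      using s by (auto simp: sums_iff)
    show "(\<lambda>k. diffs a k * (x - y) ^ k) sums (\<Sum>k. diffs a k * (x - y) ^ k)"
      using termdiff_converges[OF nx sm] by (simp add: summable_sums)
  qed
qed

lemma analytic_deriv2:
  assumes "real_analytic_on h U"
  shows "real_analytic_on (deriv h) U" "\<And>y. y \<in> U \<Longrightarrow> (h has_real_derivative deriv h y) (at y)"
proof -
  show "real_analytic_on (deriv h) U"
    unfolding real_analytic_on_def
  proof
    fix y assume y: "y \<in> U"
    obtain r a where r: "r > 0" and d: "\<And>x. x \<in> ball y r \<Longrightarrow> (h has_real_derivative (\<Sum>k. diffs a k * (x - y) ^ k)) (at x)"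
      and s: "\<And>x. x \<in> ball y r \<Longrightarrow> (\<lambda>k. diffs a k * (x - y) ^ k) sums (\<Sum>k. diffs a k * (x - y) ^ k)"
      using analytic_deriv[OF assms y] by blast
    show "\<exists>r>0. \<exists>a. \<forall>x\<in>ball y r. (\<lambda>k. a k * (x - y) ^ k) sums deriv h x"
      using r d s DERIV_imp_deriv by metis
  qed
  fix y assume y: "y \<in> U"
  obtain r a where r: "r > 0" and d: "\<And>x. x \<in> ball y r \<Longrightarrow> (h has_real_derivative (\<Sum>k. diffs a k * (x - y) ^ k)) (at x)"
    using analytic_deriv[OF assms y] by blast
  have "y \<in> ball y r" using r by simp
  from d[OF this] show "(h has_real_derivative deriv h y) (at y)"
    using DERIV_imp_deriv by metis
qed

lemma analytic_higher:
  assumes "real_analytic_on h U" "y \<in> U"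
  shows "((deriv ^^ j) h has_real_derivative (deriv ^^ Suc j) h y) (at y)"
proof -
  have "real_analytic_on ((deriv ^^ j) h) U"
    by (induction j) (auto intro: analytic_deriv2 assms)
  from analytic_deriv2(2)[OF this assms(2)] show ?thesis by simp
qed

lemma seg_sub:
  fixes x0 R x :: real
  assumes "x \<in> cball x0 R" "t \<in> {min x0 x..max x0 x}"
  shows "t \<in> cball x0 R"
  using assms by (auto simp: cball_eq_atLeastAtMost)

lemma oint_cong:
  assumes "\<And>t. t \<in> {min x0 x..max x0 x} \<Longrightarrow> u t = v t"
  shows "oint x0 x u = oint x0 x v"
  unfolding oint_def using assms by (auto intro!: integral_cong simp: min_def max_def)

lemma iter_int_add: "iter_int x0 (n + m) h = iter_int x0 n (iter_int x0 m h)"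
  by (induction n) auto

lemma iter_int_cong:
  assumes "\<And>t. t \<in> cball x0 R \<Longrightarrow> u t = v t" "x \<in> cball x0 R"
  shows "iter_int x0 n u x = iter_int x0 n v x"
  using assms(2)
proof (induction n arbitrary: x)
  case 0 then show ?case using assms(1) by simp
next
  case (Suc n)
  show ?case using Suc.IH seg_sub[OF Suc.prems] by (auto intro!: oint_cong)
qed

lemma cont_integrable:
  fixes u :: "real \<Rightarrow> real"
  assumes "continuous_on (cball x0 R) u" "x \<in> cball x0 R" "y \<in> cball x0 R"
  shows "u integrable_on {x..y}"
proof (cases "x \<le> y")
  case True
  have "continuous_on {x..y} u" using assms by (auto intro: continuous_on_subset simp: cball_eq_atLeastAtMost)
  then show ?thesis by (rule integrable_continuous_interval)
qed (simp add: integrable_on_empty)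

lemma oint_repr:
  fixes u :: "real \<Rightarrow> real"
  assumes "continuous_on (cball x0 R) u" "x \<in> cball x0 R"
  shows "oint x0 x u = integral {x0-R..x} u - integral {x0-R..x0} u"
proof -
  have R: "R \<ge> 0" using assms(2) by (auto simp: dist_real_def)
  have i: "u integrable_on {x0-R..x0+R}" using cont_integrable[OF assms(1), of "x0-R" "x0+R"] R
    by (simp add: dist_real_def)
  show ?thesis
  proof (cases "x0 \<le> x")
    case True
    have "integral {x0-R..x0} u + integral {x0..x} u = integral {x0-R..x} u"
      apply (rule Henstock_Kurzweil_Integration.integral_combine) using True R assms(2)
      by (auto simp: cball_eq_atLeastAtMost intro: integrable_subinterval_real[OF i])
    then show ?thesis using True by (simp add: oint_def)
  next
    case False
    have "integral {x0-R..x} u + integral {x..x0} u = integral {x0-R..x0} u"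
      apply (rule Henstock_Kurzweil_Integration.integral_combine) using False R assms(2)
      by (auto simp: cball_eq_atLeastAtMost intro: integrable_subinterval_real[OF i])
    then show ?thesis using False by (simp add: oint_def)
  qed
qed

lemma oint_cont:
  fixes u :: "real \<Rightarrow> real"
  assumes "continuous_on (cball x0 R) u"
  shows "continuous_on (cball x0 R) (\<lambda>x. oint x0 x u)"
proof (cases "R \<ge> 0")
  case True
  have i: "u integrable_on {x0-R..x0+R}" using cont_integrable[OF assms(1), of "x0-R" "x0+R"] True
    by (simp add: dist_real_def)
  have "continuous_on (cball x0 R) (\<lambda>x. integral {x0-R..x} u - integral {x0-R..x0} u)"
    unfolding cball_eq_atLeastAtMost
    by (intro continuous_intros indefinite_integral_continuous_1 i)
  then show ?thesis
    by (rule continuous_on_eq) (simp add: oint_repr[OF assms])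
qed simp

lemma oint_diff:
  fixes u v :: "real \<Rightarrow> real"
  assumes "continuous_on (cball x0 R) u" "continuous_on (cball x0 R) v" "x \<in> cball x0 R"
  shows "oint x0 x (\<lambda>t. u t - v t) = oint x0 x u - oint x0 x v"
proof -
  have x0: "x0 \<in> cball x0 R" using assms(3) by (auto simp: dist_real_def)
  show ?thesis unfolding oint_def
    using assms x0 by (auto simp: integral_diff cont_integrable)
qed

lemma der1: "((\<lambda>t. (t - c) ^ (k+1) / real (k+1)) has_real_derivative (t - c) ^ k) (at t within S)"
proof -
  have "((\<lambda>t. (t - c) ^ Suc k) has_real_derivative real (Suc k) * (t - c) ^ k) (at t within S)"
    by (rule derivative_eq_intros refl | simp)+
  from DERIV_cdivide[OF this, of "real (Suc k)"] show ?thesis by (simp add: add.commute)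
qed

lemma der2: "((\<lambda>t. 0 - (c - t) ^ (k+1) / real (k+1)) has_real_derivative (c - t) ^ k) (at t within S)"
proof -
  have "((\<lambda>t. (c - t) ^ Suc k) has_real_derivative real (Suc k) * (c - t) ^ k * (0 - 1)) (at t within S)"
    by (rule derivative_eq_intros refl | simp)+
  from DERIV_diff[OF DERIV_const[of 0] DERIV_cdivide[OF this, of "real (Suc k)"]] show ?thesis by (simp add: add.commute)
qed

lemma poly_int1:
  fixes a b c :: real
  assumes "a \<le> b"
  shows "((\<lambda>t. (t - c) ^ k) has_integral ((b - c) ^ (k+1) - (a - c) ^ (k+1)) / (k+1)) {a..b}"
proof -
  have "((\<lambda>t. (t - c) ^ (k+1) / (k+1)) has_vector_derivative (t - c) ^ k) (at t within {a..b})" for t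
    unfolding has_real_derivative_iff_has_vector_derivative[symmetric] by (rule der1)
  from fundamental_theorem_of_calculus[OF assms this] show ?thesis by (simp add: diff_divide_distrib)
qed

lemma poly_int2:
  fixes a b c :: real
  assumes "a \<le> b"
  shows "((\<lambda>t. (c - t) ^ k) has_integral ((c - a) ^ (k+1) - (c - b) ^ (k+1)) / (k+1)) {a..b}"
proof -
  have "((\<lambda>t. 0 - (c - t) ^ (k+1) / (k+1)) has_vector_derivative (c - t) ^ k) (at t within {a..b})" for t
    unfolding has_real_derivative_iff_has_vector_derivative[symmetric] by (rule der2)
  from fundamental_theorem_of_calculus[OF assms this] show ?thesis by (simp add: diff_divide_distrib)
qed

lemma oint_poly: "oint x0 x (\<lambda>t. c * (t - x0) ^ m) = c * (x - x0) ^ (m+1) / (m+1)"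
proof (cases "x0 \<le> x")
  case True
  from integral_unique[OF poly_int1[OF True, of x0 m]] show ?thesis using True by (simp add: oint_def)
next
  case False
  then have "x \<le> x0" by simp
  from integral_unique[OF poly_int1[OF this, of x0 m]] show ?thesis using False by (simp add: oint_def)
qed

lemma oint_bound:
  fixes D :: "real \<Rightarrow> real"
  assumes "continuous_on (cball x0 R) D" "x \<in> cball x0 R"
    and "\<And>t. t \<in> cball x0 R \<Longrightarrow> \<bar>D t\<bar> \<le> C * \<bar>t - x0\<bar> ^ k"
  shows "\<bar>oint x0 x D\<bar> \<le> C * \<bar>x - x0\<bar> ^ (k+1) / (k+1)"
proof -
  have x0: "x0 \<in> cball x0 R" using assms(2) by (auto simp: dist_real_def)
  show ?thesis
  proof (cases "x0 \<le> x")
    case True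
    have pi: "((\<lambda>t. C * (t - x0) ^ k) has_integral C * ((x - x0) ^ (k+1) / (k+1))) {x0..x}"
      using has_integral_mult_right[OF poly_int1[OF True, of x0 k]] by simp
    have "norm (integral {x0..x} D) \<le> integral {x0..x} (\<lambda>t. C * (t - x0) ^ k)"
      apply (rule integral_norm_bound_integral)
      using cont_integrable[OF assms(1) x0 assms(2)] pi apply auto[2]
      using assms(3) seg_sub[OF assms(2)] True by (fastforce simp: min_def max_def)
    also have "\<dots> = C * \<bar>x - x0\<bar> ^ (k+1) / (k+1)" using integral_unique[OF pi] True by simp
    finally show ?thesis using True by (simp add: oint_def)
  next
    case False
    then have F: "x \<le> x0" by simp
    have pi: "((\<lambda>t. C * (x0 - t) ^ k) has_integral C * ((x0 - x) ^ (k+1) / (k+1))) {x..x0}"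
      using has_integral_mult_right[OF poly_int2[OF F, of x0 k]] by simp
    have "norm (integral {x..x0} D) \<le> integral {x..x0} (\<lambda>t. C * (x0 - t) ^ k)"
      apply (rule integral_norm_bound_integral)
      using cont_integrable[OF assms(1) assms(2) x0] pi apply auto[2]
      using assms(3) seg_sub[OF assms(2)] F by (fastforce simp: min_def max_def abs_minus_commute)
    also have "\<dots> = C * \<bar>x - x0\<bar> ^ (k+1) / (k+1)" using integral_unique[OF pi] F by simp
    finally show ?thesis using False by (simp add: oint_def)
  qed
qed

lemma oint_ftc:
  fixes u u' :: "real \<Rightarrow> real"
  assumes "\<And>t. t \<in> cball x0 R \<Longrightarrow> (u has_real_derivative u' t) (at t)" "x \<in> cball x0 R"
  shows "oint x0 x u' = u x - u x0"
proof (cases "x0 \<le> x")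
  case True
  have "(u' has_integral u x - u x0) {x0..x}"
    apply (rule fundamental_theorem_of_calculus[OF True])
    unfolding has_real_derivative_iff_has_vector_derivative[symmetric]
    using assms seg_sub[OF assms(2)] True by (auto intro: has_field_derivative_at_within simp: min_def max_def)
  then show ?thesis using True by (simp add: oint_def integral_unique)
next
  case False
  then have F: "x \<le> x0" by simp
  have "(u' has_integral u x0 - u x) {x..x0}"
    apply (rule fundamental_theorem_of_calculus[OF F])
    unfolding has_real_derivative_iff_has_vector_derivative[symmetric]
    using assms seg_sub[OF assms(2)] F by (auto intro: has_field_derivative_at_within simp: min_def max_def)
  then show ?thesis using False by (simp add: oint_def integral_unique)
qed

lemma iter_bound:
  fixes F :: "real \<Rightarrow> real"
  assumes cont: "continuous_on (cball x0 R) F"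
    and lip: "\<And>t. t \<in> cball x0 R \<Longrightarrow> \<bar>F t - a\<bar> \<le> L * \<bar>t - x0\<bar>"
  shows "continuous_on (cball x0 R) (iter_int x0 m F) \<and>
    (\<forall>x\<in>cball x0 R. \<bar>iter_int x0 m F x - a * (x - x0) ^ m / fact m\<bar> \<le> L * \<bar>x - x0\<bar> ^ (m+1) / fact (m+1))"
proof (induction m)
  case 0
  then show ?case using cont lip by simp
next
  case (Suc m)
  have C: "continuous_on (cball x0 R) (iter_int x0 m F)" using Suc by blast
  have B: "\<And>t. t \<in> cball x0 R \<Longrightarrow> \<bar>iter_int x0 m F t - (a / fact m) * (t - x0) ^ m\<bar> \<le> (L / fact (m+1)) * \<bar>t - x0\<bar> ^ (m+1)"
    using Suc by (simp add: divide_simps)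
  have CP: "continuous_on (cball x0 R) (\<lambda>t. (a / fact m) * (t - x0) ^ m)" by (intro continuous_intros)
  have "continuous_on (cball x0 R) (\<lambda>x. oint x0 x (iter_int x0 m F))" by (rule oint_cont[OF C])
  moreover have "\<bar>iter_int x0 (Suc m) F x - a * (x - x0) ^ Suc m / fact (Suc m)\<bar> \<le> L * \<bar>x - x0\<bar> ^ (Suc m + 1) / fact (Suc m + 1)"
    if x: "x \<in> cball x0 R" for x
  proof -
    have "iter_int x0 (Suc m) F x - a * (x - x0) ^ Suc m / fact (Suc m) =
          oint x0 x (iter_int x0 m F) - (a / fact m) * (x - x0) ^ (m+1) / (m+1)"
      by (simp add: field_simps)
    also have "\<dots> = oint x0 x (iter_int x0 m F) - oint x0 x (\<lambda>t. (a / fact m) * (t - x0) ^ m)"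
      by (simp only: oint_poly)
    also have "\<dots> = oint x0 x (\<lambda>t. iter_int x0 m F t - (a / fact m) * (t - x0) ^ m)"
      by (rule oint_diff[OF C CP x, symmetric])
    finally have e: "iter_int x0 (Suc m) F x - a * (x - x0) ^ Suc m / fact (Suc m) =
        oint x0 x (\<lambda>t. iter_int x0 m F t - (a / fact m) * (t - x0) ^ m)" .
    have "\<bar>oint x0 x (\<lambda>t. iter_int x0 m F t - (a / fact m) * (t - x0) ^ m)\<bar> \<le> (L / fact (m+1)) * \<bar>x - x0\<bar> ^ (m+1+1) / (m+1+1)"
      by (rule oint_bound[OF _ x B]) (intro continuous_intros C CP)
    also have "\<dots> = L * \<bar>x - x0\<bar> ^ (Suc m + 1) / fact (Suc m + 1)"
      by (simp add: field_simps)
    finally show ?thesis using e by simp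
  qed
  ultimately show ?case by simp
qed


lemma ratio_lemma:
  fixes A B P a b \<eta> :: real
  assumes "P \<noteq> 0" "b \<noteq> 0" "\<bar>A - a * P\<bar> \<le> \<eta> * \<bar>P\<bar>" "\<bar>B - b * P\<bar> \<le> \<eta> * \<bar>P\<bar>" "\<eta> \<le> \<bar>b\<bar> / 2"
  shows "\<bar>A / B - a / b\<bar> \<le> 2 * (\<bar>a\<bar> + \<bar>b\<bar>) * \<eta> / \<bar>b\<bar>^2"
proof -
  define e1 where "e1 = A / P - a"
  define e2 where "e2 = B / P - b"
  have A: "A = P * (a + e1)" and B: "B = P * (b + e2)" using assms(1) by (auto simp: e1_def e2_def)
  have "\<bar>A - a * P\<bar> = \<bar>P\<bar> * \<bar>e1\<bar>" by (simp add: A algebra_simps abs_mult[symmetric])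
  then have h1: "\<bar>e1\<bar> \<le> \<eta>" using assms(3,1) by (simp add: mult.commute)
  have "\<bar>B - b * P\<bar> = \<bar>P\<bar> * \<bar>e2\<bar>" by (simp add: B algebra_simps abs_mult[symmetric])
  then have h2: "\<bar>e2\<bar> \<le> \<eta>" using assms(4,1) by (simp add: mult.commute)
  have bb: "\<bar>b + e2\<bar> \<ge> \<bar>b\<bar> / 2" using h2 assms(5) by linarith
  have bpos: "\<bar>b\<bar> > 0" using assms(2) by simp
  have "A / B = (a + e1) / (b + e2)" using assms(1) by (simp add: A B)
  also have "(a + e1) / (b + e2) - a / b = (b * e1 - a * e2) / (b * (b + e2))"
  proof -
    have ne: "b + e2 \<noteq> 0" using bb bpos by auto
    show ?thesis using ne assms(2) by (simp add: field_simps)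
  qed
  finally have eq: "A / B - a / b = (b * e1 - a * e2) / (b * (b + e2))" .
  have num: "\<bar>b * e1 - a * e2\<bar> \<le> (\<bar>a\<bar> + \<bar>b\<bar>) * \<eta>"
  proof -
    have "\<bar>b * e1 - a * e2\<bar> \<le> \<bar>b\<bar> * \<bar>e1\<bar> + \<bar>a\<bar> * \<bar>e2\<bar>" by (simp add: abs_mult[symmetric] abs_triangle_ineq4)
    also have "\<dots> \<le> \<bar>b\<bar> * \<eta> + \<bar>a\<bar> * \<eta>" using h1 h2 by (intro add_mono mult_left_mono) auto
    finally show ?thesis by (simp add: algebra_simps)
  qed
  have den: "\<bar>b * (b + e2)\<bar> \<ge> \<bar>b\<bar>^2 / 2"
  proof -
    have "\<bar>b\<bar> * (\<bar>b\<bar> / 2) \<le> \<bar>b\<bar> * \<bar>b + e2\<bar>" by (rule mult_left_mono[OF bb]) simp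
    then show ?thesis by (simp add: abs_mult power2_eq_square)
  qed
  have "\<bar>A / B - a / b\<bar> = \<bar>b * e1 - a * e2\<bar> / \<bar>b * (b + e2)\<bar>" by (simp add: eq abs_divide)
  also have "\<dots> \<le> ((\<bar>a\<bar> + \<bar>b\<bar>) * \<eta>) / (\<bar>b\<bar>^2 / 2)"
    apply (rule frac_le[OF _ num _ den]) using bpos num by auto
  also have "\<dots> = 2 * (\<bar>a\<bar> + \<bar>b\<bar>) * \<eta> / \<bar>b\<bar>^2" by simp
  finally show ?thesis .
qed

lemma arith_aux: fixes s q e :: real assumes "s \<noteq> 0" "q \<noteq> 0"
  shows "2 * s * (e * q / (4 * s)) / q = e / 2"
  using assms by (simp add: field_simps)

lemma lip_lemma:
  fixes F F' :: "real \<Rightarrow> real"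
  assumes "\<And>t. t \<in> cball x0 R \<Longrightarrow> (F has_real_derivative F' t) (at t)"
    and "continuous_on (cball x0 R) F'" and "R \<ge> 0"
  obtains L where "L \<ge> 0" "\<And>t. t \<in> cball x0 R \<Longrightarrow> \<bar>F t - F x0\<bar> \<le> L * \<bar>t - x0\<bar>"
proof -
  have "bounded (F' ` cball x0 R)"
    by (intro compact_imp_bounded compact_continuous_image assms(2) compact_cball)
  then obtain B where "\<forall>y\<in>F' ` cball x0 R. norm y \<le> B" by (auto simp: bounded_iff)
  then have B: "\<And>t. t \<in> cball x0 R \<Longrightarrow> \<bar>F' t\<bar> \<le> B" by auto
  have x0: "x0 \<in> cball x0 R" using assms(3) by simp
  have B0: "B \<ge> 0" using B[OF x0] by simp
  show thesis
  proof (rule that[OF B0])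
    fix t assume t: "t \<in> cball x0 R"
    have "norm (F t - F x0) \<le> B * norm (t - x0)"
    proof -
      have d: "\<And>z. z \<in> cball x0 R \<Longrightarrow> (F has_field_derivative F' z) (at z within cball x0 R)"
        using assms(1) has_field_derivative_at_within by blast
      have nb: "\<And>z. z \<in> cball x0 R \<Longrightarrow> norm (F' z) \<le> B" using B by simp
      show ?thesis by (rule field_differentiable_bound[OF convex_cball d nb t x0])
    qed
    then show "\<bar>F t - F x0\<bar> \<le> B * \<bar>t - x0\<bar>" by simp
  qed
qed

lemma reduce_lemma:
  assumes der: "\<And>j t. j \<le> K \<Longrightarrow> t \<in> cball x0 R \<Longrightarrow> ((deriv ^^ j) f has_real_derivative (deriv ^^ Suc j) f t) (at t)"
    and zero: "\<And>j. j \<le> K \<Longrightarrow> (deriv ^^ j) f x0 = 0"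
    and x: "x \<in> cball x0 R"
  shows "iter_int x0 (n + Suc K) ((deriv ^^ Suc K) f) x = iter_int x0 n f x"
proof -
  have claim: "\<forall>t\<in>cball x0 R. iter_int x0 j ((deriv ^^ Suc K) f) t = (deriv ^^ (Suc K - j)) f t" if "j \<le> Suc K" for j
    using that
  proof (induction j)
    case 0 then show ?case by simp
  next
    case (Suc j)
    show ?case
    proof
      fix t assume t: "t \<in> cball x0 R"
      have e1: "Suc K - j = Suc (K - j)" using Suc.prems by simp
      have "iter_int x0 (Suc j) ((deriv ^^ Suc K) f) t = oint x0 t ((deriv ^^ (Suc K - j)) f)"
        using Suc.IH Suc.prems seg_sub[OF t] by (auto intro!: oint_cong)
      also have "\<dots> = (deriv ^^ (K - j)) f t - (deriv ^^ (K - j)) f x0"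
        unfolding e1 by (rule oint_ftc[OF der t]) auto
      also have "\<dots> = (deriv ^^ (Suc K - Suc j)) f t" using zero[of "K - j"] by simp
      finally show "iter_int x0 (Suc j) ((deriv ^^ Suc K) f) t = (deriv ^^ (Suc K - Suc j)) f t" .
    qed
  qed
  have "iter_int x0 (n + Suc K) ((deriv ^^ Suc K) f) x = iter_int x0 n (iter_int x0 (Suc K) ((deriv ^^ Suc K) f)) x"
    by (simp only: iter_int_add)
  also have "\<dots> = iter_int x0 n f x"
    by (rule iter_int_cong[OF _ x]) (use claim[of "Suc K"] in simp)
  finally show ?thesis .
qed

lemma step_bound:
  fixes X a h L M R :: real
  assumes "L \<ge> 0" "L \<le> M" "\<bar>h\<bar> \<le> R"
    and "\<bar>X - a * h ^ m / fact m\<bar> \<le> L * \<bar>h\<bar> ^ (m+1) / fact (m+1)"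
  shows "\<bar>X - a * (h ^ m / fact m)\<bar> \<le> (M * R / real (m+1)) * \<bar>h ^ m / fact m\<bar>"
proof -
  have "L * \<bar>h\<bar> ^ (m+1) / fact (m+1) = (L * \<bar>h\<bar> / (m+1)) * \<bar>h ^ m / fact m\<bar>"
    by (simp add: abs_mult power_abs field_simps)
  also have "\<dots> \<le> (M * R / (m+1)) * \<bar>h ^ m / fact m\<bar>"
    apply (intro mult_right_mono divide_right_mono mult_mono)
    using assms by auto
  finally show ?thesis using assms(4) by simp
qed

theorem lemma1:
  fixes f g :: "real \<Rightarrow> real" and U :: "real set" and x0 R :: real and K :: nat
  assumes "open U" and "x0 \<in> U"
    and "real_analytic_on f U" and "real_analytic_on g U"
    and "\<And>j. j \<le> K \<Longrightarrow> (deriv ^^ j) f x0 = 0 \<and> (deriv ^^ j) g x0 = 0"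
    and "(deriv ^^ (Suc K)) g x0 \<noteq> 0"
    and "R > 0" and "cball x0 R \<subseteq> U"
    and "\<And>x j. x \<in> cball x0 R \<Longrightarrow> x \<noteq> x0 \<Longrightarrow> j \<le> Suc K \<Longrightarrow>
           (deriv ^^ j) f x \<noteq> 0 \<and> (deriv ^^ j) g x \<noteq> 0"
  shows "(\<forall>x\<in>cball x0 R - {x0}.
            (\<lambda>n. iter_int x0 n f x / iter_int x0 n g x)
              \<longlonglongrightarrow> (deriv ^^ (Suc K)) f x0 / (deriv ^^ (Suc K)) g x0)
       \<and> uniform_limit (cball x0 R - {x0})
            (\<lambda>n x. iter_int x0 n f x / iter_int x0 n g x)
            (\<lambda>x. (deriv ^^ (Suc K)) f x0 / (deriv ^^ (Suc K)) g x0) sequentially"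
proof -
  note A = assms
  have R0: "R \<ge> 0" using A(7) by simp
  have x0c: "x0 \<in> cball x0 R" using R0 by simp
  have derf: "\<And>j t. t \<in> cball x0 R \<Longrightarrow> ((deriv ^^ j) f has_real_derivative (deriv ^^ Suc j) f t) (at t)"
    using analytic_higher[OF A(3)] A(8) by blast
  have derg: "\<And>j t. t \<in> cball x0 R \<Longrightarrow> ((deriv ^^ j) g has_real_derivative (deriv ^^ Suc j) g t) (at t)"
    using analytic_higher[OF A(4)] A(8) by blast
  have contf: "continuous_on (cball x0 R) ((deriv ^^ j) f)" for j
    using derf DERIV_isCont by (blast intro: continuous_at_imp_continuous_on)
  have contg: "continuous_on (cball x0 R) ((deriv ^^ j) g)" for j
    using derg DERIV_isCont by (blast intro: continuous_at_imp_continuous_on)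
  define a where "a = (deriv ^^ Suc K) f x0"
  define b where "b = (deriv ^^ Suc K) g x0"
  have b0: "b \<noteq> 0" using A(6) by (simp add: b_def)
  obtain Lf where Lf0: "Lf \<ge> 0" and Lf: "\<And>t. t \<in> cball x0 R \<Longrightarrow> \<bar>(deriv ^^ Suc K) f t - a\<bar> \<le> Lf * \<bar>t - x0\<bar>"
    using lip_lemma[OF derf contf R0] unfolding a_def by blast
  obtain Lg where Lg0: "Lg \<ge> 0" and Lg: "\<And>t. t \<in> cball x0 R \<Longrightarrow> \<bar>(deriv ^^ Suc K) g t - b\<bar> \<le> Lg * \<bar>t - x0\<bar>"
    using lip_lemma[OF derg contg R0] unfolding b_def by blast
  define C where "C = max Lf Lg * R"
  have bf: "\<bar>iter_int x0 n f x - a * ((x - x0) ^ (n + Suc K) / fact (n + Suc K))\<bar>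
      \<le> (C / (n + Suc K + 1)) * \<bar>(x - x0) ^ (n + Suc K) / fact (n + Suc K)\<bar>" if x: "x \<in> cball x0 R" for n x
  proof -
    have h1: "\<bar>iter_int x0 (n + Suc K) ((deriv ^^ Suc K) f) x - a * (x - x0) ^ (n + Suc K) / fact (n + Suc K)\<bar>
        \<le> Lf * \<bar>x - x0\<bar> ^ (n + Suc K + 1) / fact (n + Suc K + 1)"
      using iter_bound[OF contf Lf] x by blast
    have "\<bar>iter_int x0 (n + Suc K) ((deriv ^^ Suc K) f) x - a * ((x - x0) ^ (n + Suc K) / fact (n + Suc K))\<bar>
      \<le> (max Lf Lg * R / (n + Suc K + 1)) * \<bar>(x - x0) ^ (n + Suc K) / fact (n + Suc K)\<bar>"
      by (rule step_bound[OF Lf0 max.cobounded1 _ h1]) (use x in \<open>simp add: dist_real_def abs_minus_commute\<close>)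
    then show ?thesis unfolding C_def
      using reduce_lemma[OF derf A(5)[THEN conjunct1] x] by simp
  qed
  have bg: "\<bar>iter_int x0 n g x - b * ((x - x0) ^ (n + Suc K) / fact (n + Suc K))\<bar>
      \<le> (C / (n + Suc K + 1)) * \<bar>(x - x0) ^ (n + Suc K) / fact (n + Suc K)\<bar>" if x: "x \<in> cball x0 R" for n x
  proof -
    have h1: "\<bar>iter_int x0 (n + Suc K) ((deriv ^^ Suc K) g) x - b * (x - x0) ^ (n + Suc K) / fact (n + Suc K)\<bar>
        \<le> Lg * \<bar>x - x0\<bar> ^ (n + Suc K + 1) / fact (n + Suc K + 1)"
      using iter_bound[OF contg Lg] x by blast
    have "\<bar>iter_int x0 (n + Suc K) ((deriv ^^ Suc K) g) x - b * ((x - x0) ^ (n + Suc K) / fact (n + Suc K))\<bar>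
      \<le> (max Lf Lg * R / (n + Suc K + 1)) * \<bar>(x - x0) ^ (n + Suc K) / fact (n + Suc K)\<bar>"
      by (rule step_bound[OF Lg0 max.cobounded2 _ h1]) (use x in \<open>simp add: dist_real_def abs_minus_commute\<close>)
    then show ?thesis unfolding C_def
      using reduce_lemma[OF derg A(5)[THEN conjunct2] x] by simp
  qed
  have U: "uniform_limit (cball x0 R - {x0}) (\<lambda>n x. iter_int x0 n f x / iter_int x0 n g x) (\<lambda>x. a / b) sequentially"
    unfolding uniform_limit_sequentially_iff
  proof (intro allI impI)
    fix e :: real assume e: "e > 0"
    define \<eta> where "\<eta> = min (\<bar>b\<bar> / 2) (e * \<bar>b\<bar>^2 / (4 * (\<bar>a\<bar> + \<bar>b\<bar>)))"
    have bp: "\<bar>b\<bar> > 0" using b0 by simp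
    have \<eta>0: "\<eta> > 0" unfolding \<eta>_def using e bp by (auto intro!: divide_pos_pos)
    obtain N :: nat where N: "C / \<eta> < real N" using reals_Archimedean2 by blast
    show "\<exists>N. \<forall>n\<ge>N. \<forall>x\<in>cball x0 R - {x0}. dist (iter_int x0 n f x / iter_int x0 n g x) (a / b) < e"
    proof (intro exI allI impI ballI)
      fix n x assume n: "N \<le> n" and x: "x \<in> cball x0 R - {x0}"
      define m where "m = n + Suc K"
      define P where "P = (x - x0) ^ m / fact m"
      have P0: "P \<noteq> 0" using x by (simp add: P_def)
      have "C / \<eta> < real m + 1" using N n by (simp add: m_def)
      then have c\<eta>: "C / (m + 1) \<le> \<eta>" using \<eta>0 by (simp add: field_simps)
      have r: "\<bar>iter_int x0 n f x / iter_int x0 n g x - a / b\<bar> \<le> 2 * (\<bar>a\<bar> + \<bar>b\<bar>) * (C / (m + 1)) / \<bar>b\<bar>^2"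
        apply (rule ratio_lemma[OF P0 b0])
        using bf[of x n] bg[of x n] x c\<eta> unfolding P_def m_def \<eta>_def by auto
      also have "\<dots> \<le> 2 * (\<bar>a\<bar> + \<bar>b\<bar>) * \<eta> / \<bar>b\<bar>^2"
        using c\<eta> bp by (intro divide_right_mono mult_left_mono) auto
      also have "\<dots> \<le> 2 * (\<bar>a\<bar> + \<bar>b\<bar>) * (e * \<bar>b\<bar>^2 / (4 * (\<bar>a\<bar> + \<bar>b\<bar>))) / \<bar>b\<bar>^2"
        unfolding \<eta>_def using bp by (intro divide_right_mono mult_left_mono) auto
      also have "\<dots> = e / 2" by (rule arith_aux) (use bp in auto)
      finally show "dist (iter_int x0 n f x / iter_int x0 n g x) (a / b) < e"
        using e by (simp add: dist_real_def)
    qed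
  qed
  show ?thesis
    unfolding a_def[symmetric] b_def[symmetric]
    using U tendsto_uniform_limitI[OF U] by blast
qed

end
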